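(* Let $S$ be an inverse semigroup. If $S$ is DSC, then $S$ is a group.
   Context: An inverse semigroup is a semigroup in which every element $s$ has a unique $t$ with $sts=s$ and $tst=t$. A diagonal subsemigroup of $S\times S$ is a subsemigroup containing $\{(s,s)\colon s\in S\}$; a congruence is a symmetric and transitive diagonal subsemigroup; $S$ is DSC if every diagonal subsemigroup of $S\times S$ is a congruence on $S$. *)

theory Defs
  imports Main
begin

text \<open>The semigroup S is the whole carrier type 'a of class semigroup_mult.\<close>

definition inverse_semigroup :: "('a::semigroup_mult) itself \<Rightarrow> bool" where
  "inverse_semigroup _ \<longleftrightarrow> (\<forall>s::'a. \<exists>!t. s * t * s = s \<and> t * s * t = t)"

definition diagonal_subsemigroup :: "('a::semigroup_mult \<times> 'a) set \<Rightarrow> bool" where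
  "diagonal_subsemigroup R \<longleftrightarrow>
     (\<forall>s. (s, s) \<in> R) \<and>
     (\<forall>a b c d. (a, b) \<in> R \<longrightarrow> (c, d) \<in> R \<longrightarrow> (a * c, b * d) \<in> R)"

definition congruence_rel :: "('a::semigroup_mult \<times> 'a) set \<Rightarrow> bool" where
  "congruence_rel R \<longleftrightarrow> diagonal_subsemigroup R \<and> sym R \<and> trans R"

definition DSC :: "('a::semigroup_mult) itself \<Rightarrow> bool" where
  "DSC _ \<longleftrightarrow> (\<forall>R :: ('a \<times> 'a) set. diagonal_subsemigroup R \<longrightarrow> congruence_rel R)"

definition is_group :: "('a::semigroup_mult) itself \<Rightarrow> bool" where
  "is_group _ \<longleftrightarrow> (\<exists>e::'a. (\<forall>x. e * x = x \<and> x * e = x) \<and> (\<forall>x. \<exists>y. x * y = e \<and> y * x = e))"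

end

theory Submission
  imports Defs
begin

lemma uniq_inv:
  assumes IS: "\<forall>s::'a::semigroup_mult. \<exists>!t. s*t*s = s \<and> t*s*t = t"
    and "s*t*s = s" "t*s*t = t" "s*u*s = s" "u*s*u = (u::'a)"
  shows "t = u"
  using IS assms(2-5) by blast

lemma idem_idem:
  assumes IS: "\<forall>s::'a::semigroup_mult. \<exists>!t. s*t*s = s \<and> t*s*t = t"
    and e: "e*e = (e::'a)" and f: "f*f = f"
  shows "e*f*(e*f) = e*f"
proof -
  obtain x where x: "e*f*x*(e*f) = e*f" "x*(e*f)*x = x" using IS by blast
  have a: "e*f*(f*x*e)*(e*f) = e*f"
    using x(1) e f by (metis mult.assoc)
  have b: "(f*x*e)*(e*f)*(f*x*e) = f*x*e"
  proof -
    have "(f*x*e)*(e*f)*(f*x*e) = f*(x*(e*f)*x)*e"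
      using e f by (metis mult.assoc)
    thus ?thesis using x(2) by simp
  qed
  have xe: "x = f*x*e" using uniq_inv[OF IS x a b] .
  have xx: "x*x = x"
  proof -
    have "x*x = (f*x*e)*(f*x*e)" using xe by simp
    also have "\<dots> = f*(x*(e*f)*x)*e" by (simp add: mult.assoc)
    also have "\<dots> = x" using x(2) xe by simp
    finally show ?thesis .
  qed
  have c: "x*x*x = x" "x*x*x = x" using xx by simp_all
  have d: "x*(e*f)*x = x" "e*f*x*(e*f) = e*f" using x by simp_all
  have "e*f = x" using uniq_inv[OF IS, of x "e*f" x] d c by simp
  thus ?thesis using xx by simp
qed

lemma idem_comm:
  assumes IS: "\<forall>s::'a::semigroup_mult. \<exists>!t. s*t*s = s \<and> t*s*t = t"
    and e: "e*e = (e::'a)" and f: "f*f = f"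
  shows "e*f = f*e"
proof -
  have ef: "e*f*(e*f) = e*f" using idem_idem[OF IS e f] .
  have fe: "f*e*(f*e) = f*e" using idem_idem[OF IS f e] .
  have 1: "e*f*(f*e)*(e*f) = e*f"
  proof -
    have "e*f*(f*e)*(e*f) = (e*f)*(e*f)" using e f by (metis mult.assoc)
    thus ?thesis using ef by simp
  qed
  have 2: "(f*e)*(e*f)*(f*e) = f*e"
  proof -
    have "(f*e)*(e*f)*(f*e) = (f*e)*(f*e)" using e f by (metis mult.assoc)
    thus ?thesis using fe by simp
  qed
  have 3: "e*f*(e*f)*(e*f) = e*f" using ef by simp
  show ?thesis using uniq_inv[OF IS 1 2 3 3] by simp
qed

theorem mainTheorem8:
  assumes "inverse_semigroup TYPE('a::semigroup_mult)"
      and "DSC TYPE('a)"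
  shows "is_group TYPE('a)"
proof -
  have IS: "\<forall>s::'a. \<exists>!t. s*t*s = s \<and> t*s*t = t"
    using assms(1) unfolding inverse_semigroup_def by blast
  define R :: "('a \<times> 'a) set" where
    "R = {(a,b). a = b \<or> (\<exists>e. e*e = e \<and> a = e*b)}"
  have key: "\<exists>g. g*g = g \<and> b*f = g*b" if f: "f*f = (f::'a)" for b f
  proof -
    obtain b' where b': "b*b'*b = b" "b'*b*b' = b'" using IS by blast
    have i: "(b'*b)*(b'*b) = b'*b" using b' by (metis mult.assoc)
    have c: "f*(b'*b) = (b'*b)*f" using idem_comm[OF IS f i] .
    have 1: "(b*f*b')*b = b*f"
    proof -
      have "(b*f*b')*b = b*(f*(b'*b))" by (simp add: mult.assoc)
      also have "\<dots> = b*b'*b*f" using c by (simp add: mult.assoc)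
      finally show ?thesis using b' by simp
    qed
    have 2: "(b*f*b')*(b*f*b') = b*f*b'"
    proof -
      have "(b*f*b')*(b*f*b') = ((b*f*b')*b)*f*b'" by (simp add: mult.assoc)
      also have "\<dots> = b*(f*f)*b'" using 1 by (simp add: mult.assoc)
      finally show ?thesis using f by simp
    qed
    show ?thesis using 1 2 by metis
  qed
  have DS: "diagonal_subsemigroup R"
    unfolding diagonal_subsemigroup_def
  proof (intro conjI allI impI)
    fix s show "(s,s) \<in> R" unfolding R_def by simp
  next
    fix a b c d assume ab: "(a,b) \<in> R" and cd: "(c,d) \<in> R"
    show "(a*c, b*d) \<in> R"
    proof (cases "a = b")
      case True
      show ?thesis
      proof (cases "c = d")
        case True then show ?thesis using \<open>a=b\<close> unfolding R_def by simp
      next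
        case False
        then obtain f where f: "f*f = f" "c = f*d" using cd unfolding R_def by auto
        obtain g where g: "g*g = g" "b*f = g*b" using key[OF f(1)] by blast
        have "a*c = g*(b*d)" using True f g by (metis mult.assoc)
        thus ?thesis using g unfolding R_def by auto
      qed
    next
      case False
      then obtain e where e: "e*e = e" "a = e*b" using ab unfolding R_def by auto
      show ?thesis
      proof (cases "c = d")
        case True
        have "a*c = e*(b*d)" using True e by (simp add: mult.assoc)
        thus ?thesis using e unfolding R_def by auto
      next
        case False
        then obtain f where f: "f*f = f" "c = f*d" using cd unfolding R_def by auto
        obtain g where g: "g*g = g" "b*f = g*b" using key[OF f(1)] by blast
        have eg: "(e*g)*(e*g) = e*g" using idem_idem[OF IS e(1) g(1)] .
        have "a*c = (e*g)*(b*d)" using e f g by (metis mult.assoc)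
        thus ?thesis using eg unfolding R_def by auto
      qed
    qed
  qed
  have symR: "sym R" using assms(2) DS unfolding DSC_def congruence_rel_def by blast
  have ef: "e*f = f" if e: "e*e = (e::'a)" and f: "f*f = f" for e f
  proof -
    have "(e*f, f) \<in> R" unfolding R_def using e by auto
    hence "(f, e*f) \<in> R" using symR by (meson symD)
    then consider "f = e*f" | g where "g*g = g" "f = g*(e*f)" unfolding R_def by auto
    thus ?thesis
    proof cases
      case 1 thus ?thesis by simp
    next
      case 2
      have "e*f = e*(g*(e*f))" using 2 by simp
      also have "\<dots> = g*e*(e*f)" using idem_comm[OF IS e 2(1)] by (metis mult.assoc)
      also have "\<dots> = g*(e*f)" using e by (metis mult.assoc)
      finally show ?thesis using 2 by simp
    qed
  qed
  have uniqE: "e = f" if e: "e*e = (e::'a)" and f: "f*f = f" for e f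
    using ef[OF e f] ef[OF f e] idem_comm[OF IS e f] by simp
  obtain z :: 'a where True by blast
  obtain z' where z': "z*z'*z = z" "z'*z*z' = z'" using IS by blast
  define e where "e = z*z'"
  have ee: "e*e = e" unfolding e_def using z' by (metis mult.assoc)
  have X: "e*x = x \<and> x*e = x \<and> (\<exists>y. x*y = e \<and> y*x = e)" for x :: 'a
  proof -
    obtain x' where x': "x*x'*x = x" "x'*x*x' = x'" using IS by blast
    have i1: "(x*x')*(x*x') = x*x'" using x' by (metis mult.assoc)
    have i2: "(x'*x)*(x'*x) = x'*x" using x' by (metis mult.assoc)
    have h1: "x*x' = e" using uniqE[OF i1 ee] .
    have h2: "x'*x = e" using uniqE[OF i2 ee] .
    have "e*x = x" using h1 x' by simp
    moreover have "x*e = x" using h2 x' by (simp add: mult.assoc)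
    ultimately show ?thesis using h1 h2 by blast
  qed
  show ?thesis unfolding is_group_def using X by blast
qed

end
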